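(* Let $G$ and $H$ be graphs with $i_G$ and $i_H$ isolated vertices, respectively. Then $$\rho(G\times H)\geq\max\{\rho_o(G^-)\rho(H^-),\ \rho_o(H^-)\rho(G^-)\}+i_G|V(H)|+i_H|V(G)|-i_Gi_H.$$
   Context: All graphs are finite and simple. $G^-$ denotes the graph obtained from $G$ by deleting all isolated vertices. A packing of $G$ is a set $P\subseteq V(G)$ with $N[u]\cap N[v]=\emptyset$ for all distinct $u,v\in P$ ($N[\cdot]$ the closed neighborhood); $\rho(G)$ is the maximum size of a packing. An open packing is a set whose vertices have pairwise disjoint open neighborhoods; $\rho_o(G)$ is its maximum size. The direct product $G\times H$ has vertex set $V(G)\times V(H)$, with $(g,h)$ adjacent to $(g',h')$ iff $gg'\in E(G)$ and $hh'\in E(H)$. *)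

theory Defs
  imports Main
begin

record 'a sgraph =
  verts :: "'a set"
  adj :: "'a \<Rightarrow> 'a \<Rightarrow> bool"

definition graph :: "('a, 'b) sgraph_scheme \<Rightarrow> bool" where
  "graph G \<longleftrightarrow> finite (verts G)
     \<and> (\<forall>u v. adj G u v \<longrightarrow> u \<in> verts G \<and> v \<in> verts G)
     \<and> (\<forall>u v. adj G u v \<longrightarrow> adj G v u)
     \<and> (\<forall>v. \<not> adj G v v)"

definition open_nbhd :: "'a sgraph \<Rightarrow> 'a \<Rightarrow> 'a set" where
  "open_nbhd G v = {u \<in> verts G. adj G v u}"

definition closed_nbhd :: "'a sgraph \<Rightarrow> 'a \<Rightarrow> 'a set" where
  "closed_nbhd G v = insert v (open_nbhd G v)"

definition packing :: "'a sgraph \<Rightarrow> 'a set \<Rightarrow> bool" where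
  "packing G P \<longleftrightarrow> P \<subseteq> verts G \<and>
     (\<forall>u\<in>P. \<forall>v\<in>P. u \<noteq> v \<longrightarrow> closed_nbhd G u \<inter> closed_nbhd G v = {})"

definition open_packing :: "'a sgraph \<Rightarrow> 'a set \<Rightarrow> bool" where
  "open_packing G P \<longleftrightarrow> P \<subseteq> verts G \<and>
     (\<forall>u\<in>P. \<forall>v\<in>P. u \<noteq> v \<longrightarrow> open_nbhd G u \<inter> open_nbhd G v = {})"

definition packing_number :: "'a sgraph \<Rightarrow> nat" where
  "packing_number G = Max (card ` {P. packing G P})"

definition open_packing_number :: "'a sgraph \<Rightarrow> nat" where
  "open_packing_number G = Max (card ` {P. open_packing G P})"

definition isolated_vertices :: "'a sgraph \<Rightarrow> 'a set" where
  "isolated_vertices G = {v \<in> verts G. open_nbhd G v = {}}"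

definition del_isolated :: "'a sgraph \<Rightarrow> 'a sgraph" where
  "del_isolated G = \<lparr>verts = verts G - isolated_vertices G,
     adj = (\<lambda>u v. adj G u v \<and> u \<notin> isolated_vertices G \<and> v \<notin> isolated_vertices G)\<rparr>"

definition direct_prod :: "'a sgraph \<Rightarrow> 'b sgraph \<Rightarrow> ('a \<times> 'b) sgraph" where
  "direct_prod G H = \<lparr>verts = verts G \<times> verts H,
     adj = (\<lambda>(g, h) (g', h'). adj G g g' \<and> adj H h h')\<rparr>"

end

theory Submission
  imports Defs
begin

lemma gfacts:
  assumes "graph G"
  shows "finite (verts G)" "adj G u v \<Longrightarrow> u \<in> verts G" "adj G u v \<Longrightarrow> v \<in> verts G"
    "adj G u v \<Longrightarrow> adj G v u" "\<not> adj G v v"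
  using assms unfolding graph_def by blast+

lemma iso_iff: "v \<in> isolated_vertices G \<longleftrightarrow> v \<in> verts G \<and> (\<forall>u \<in> verts G. \<not> adj G v u)"
  unfolding isolated_vertices_def open_nbhd_def by auto

lemma pn_ge:
  assumes "finite (verts G)" "packing G P"
  shows "card P \<le> packing_number G"
proof -
  have "{P. packing G P} \<subseteq> Pow (verts G)" unfolding packing_def by auto
  hence "finite {P. packing G P}" using assms(1) finite_subset by blast
  thus ?thesis unfolding packing_number_def using assms(2) by auto
qed

lemma pn_ex:
  assumes "finite (verts G)"
  shows "\<exists>P. packing G P \<and> card P = packing_number G"
proof -
  have "{P. packing G P} \<subseteq> Pow (verts G)" unfolding packing_def by auto
  hence f: "finite {P. packing G P}" using assms(1) finite_subset by blast
  have "packing G {}" unfolding packing_def by auto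
  hence "packing_number G \<in> card ` {P. packing G P}" unfolding packing_number_def
    using f by (intro Max_in) auto
  thus ?thesis by auto
qed

lemma opn_ex:
  assumes "finite (verts G)"
  shows "\<exists>P. open_packing G P \<and> card P = open_packing_number G"
proof -
  have "{P. open_packing G P} \<subseteq> Pow (verts G)" unfolding open_packing_def by auto
  hence f: "finite {P. open_packing G P}" using assms(1) finite_subset by blast
  have "open_packing G {}" unfolding open_packing_def by auto
  hence "open_packing_number G \<in> card ` {P. open_packing G P}" unfolding open_packing_number_def
    using f by (intro Max_in) auto
  thus ?thesis by auto
qed

lemma del_fin: "finite (verts G) \<Longrightarrow> finite (verts (del_isolated G))"
  unfolding del_isolated_def by auto

lemma op_facts:
  assumes g: "graph G" and op: "open_packing (del_isolated G) Q"
  shows "Q \<subseteq> verts G - isolated_vertices G"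
    "\<And>u v x. u\<in>Q \<Longrightarrow> v\<in>Q \<Longrightarrow> u\<noteq>v \<Longrightarrow> adj G u x \<Longrightarrow> adj G v x \<Longrightarrow> False"
proof -
  show s: "Q \<subseteq> verts G - isolated_vertices G" using op unfolding open_packing_def del_isolated_def by auto
  fix u v x assume u: "u\<in>Q" and v: "v\<in>Q" and uv: "u\<noteq>v" and a: "adj G u x" "adj G v x"
  have xv: "x \<in> verts G" using a gfacts[OF g] by blast
  have xi: "x \<notin> isolated_vertices G" using a(1) gfacts[OF g] iso_iff by metis
  have "x \<in> open_nbhd (del_isolated G) u \<inter> open_nbhd (del_isolated G) v"
    using s u v a xv xi unfolding open_nbhd_def del_isolated_def by auto
  thus False using op u v uv unfolding open_packing_def by blast
qed

lemma p_facts: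
  assumes g: "graph G" and op: "packing (del_isolated G) P"
  shows "P \<subseteq> verts G - isolated_vertices G"
    "\<And>u v x. u\<in>P \<Longrightarrow> v\<in>P \<Longrightarrow> u\<noteq>v \<Longrightarrow> adj G u x \<Longrightarrow> adj G v x \<Longrightarrow> False"
    "\<And>u v. u\<in>P \<Longrightarrow> v\<in>P \<Longrightarrow> u\<noteq>v \<Longrightarrow> adj G u v \<Longrightarrow> False"
proof -
  have s: "P \<subseteq> verts G - isolated_vertices G" using op unfolding packing_def del_isolated_def by auto
  then show "P \<subseteq> verts G - isolated_vertices G" .
  {
  fix u v x assume u: "u\<in>P" and v: "v\<in>P" and uv: "u\<noteq>v" and a: "adj G u x" "adj G v x"
  have xv: "x \<in> verts G" using a gfacts[OF g] by blast
  have xi: "x \<notin> isolated_vertices G" using a(1) gfacts[OF g] iso_iff by metis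
  have "x \<in> closed_nbhd (del_isolated G) u \<inter> closed_nbhd (del_isolated G) v"
    using s u v a xv xi unfolding closed_nbhd_def open_nbhd_def del_isolated_def by auto
  thus False using op u v uv unfolding packing_def by blast
  }
  fix u v assume u: "u\<in>P" and v: "v\<in>P" and uv: "u\<noteq>v" and a: "adj G u v"
  have "v \<in> closed_nbhd (del_isolated G) u \<inter> closed_nbhd (del_isolated G) v"
    using s u v a unfolding closed_nbhd_def open_nbhd_def del_isolated_def by auto
  thus False using op u v uv unfolding packing_def by blast
qed

lemma cn_prod: "closed_nbhd (direct_prod G H) (g,h) =
   insert (g,h) {(x,y). x \<in> verts G \<and> y \<in> verts H \<and> adj G g x \<and> adj H h y}"
  unfolding closed_nbhd_def open_nbhd_def direct_prod_def by auto

definition Iso where "Iso G H = {(g,h). g \<in> verts G \<and> h \<in> verts H \<and>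
   (g \<in> isolated_vertices G \<or> h \<in> isolated_vertices H)}"

lemma iso_cn:
  assumes "graph G" "graph H" "(g,h) \<in> Iso G H"
  shows "closed_nbhd (direct_prod G H) (g,h) = {(g,h)}"
  using assms unfolding cn_prod Iso_def iso_iff by auto

lemma iso_not_in:
  assumes g: "graph G" and h: "graph H" and "(g,h) \<in> Iso G H" and "(g,h) \<noteq> (g',h')"
  shows "(g,h) \<notin> closed_nbhd (direct_prod G H) (g',h')"
  using assms gfacts[OF g] gfacts[OF h] unfolding cn_prod Iso_def iso_iff by blast

lemma pack_gen:
  assumes g: "graph G" and h: "graph H" and S: "S \<subseteq> verts G \<times> verts H"
  and nz: "\<And>u v. u \<in> S \<Longrightarrow> v \<in> S \<Longrightarrow> u \<noteq> v \<Longrightarrow> u \<notin> Iso G H \<Longrightarrow> v \<notin> Iso G H \<Longrightarrow>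
     closed_nbhd (direct_prod G H) u \<inter> closed_nbhd (direct_prod G H) v = {}"
  shows "packing (direct_prod G H) (S \<union> Iso G H)"
  unfolding packing_def
proof (intro conjI ballI impI)
  show "S \<union> Iso G H \<subseteq> verts (direct_prod G H)" using S unfolding Iso_def direct_prod_def by auto
next
  fix u v assume u: "u \<in> S \<union> Iso G H" and v: "v \<in> S \<union> Iso G H" and uv: "u \<noteq> v"
  show "closed_nbhd (direct_prod G H) u \<inter> closed_nbhd (direct_prod G H) v = {}"
  proof (cases "u \<in> Iso G H")
    case True
    thus ?thesis using iso_cn[OF g h] iso_not_in[OF g h] uv
      by (metis disjoint_iff prod.collapse singletonD)
  next
    case False
    show ?thesis
    proof (cases "v \<in> Iso G H")
      case True
      thus ?thesis using iso_cn[OF g h] iso_not_in[OF g h] uv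
        by (metis disjoint_iff prod.collapse singletonD)
    next
      case F2: False
      thus ?thesis using False u v uv nz by blast
    qed
  qed
qed


lemma nz1:
  assumes g: "graph G" and h: "graph H"
  and OP: "\<And>u v x. u\<in>Q \<Longrightarrow> v\<in>Q \<Longrightarrow> u\<noteq>v \<Longrightarrow> adj G u x \<Longrightarrow> adj G v x \<Longrightarrow> False"
  and P2: "\<And>u v x. u\<in>P \<Longrightarrow> v\<in>P \<Longrightarrow> u\<noteq>v \<Longrightarrow> adj H u x \<Longrightarrow> adj H v x \<Longrightarrow> False"
  and P1: "\<And>u v. u\<in>P \<Longrightarrow> v\<in>P \<Longrightarrow> u\<noteq>v \<Longrightarrow> adj H u v \<Longrightarrow> False"
  and u: "(a,b) \<in> Q \<times> P" and v: "(c,d) \<in> Q \<times> P" and uv: "(a,b) \<noteq> (c,d)"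
  shows "closed_nbhd (direct_prod G H) (a,b) \<inter> closed_nbhd (direct_prod G H) (c,d) = {}"
proof -
  have "False" if w1: "(x,y) \<in> closed_nbhd (direct_prod G H) (a,b)"
     and w2: "(x,y) \<in> closed_nbhd (direct_prod G H) (c,d)" for x y
  proof -
    consider "(x,y) = (a,b)" | "adj G a x \<and> adj H b y" using w1 unfolding cn_prod by auto
    note c1 = this
    consider "(x,y) = (c,d)" | "adj G c x \<and> adj H d y" using w2 unfolding cn_prod by auto
    note c2 = this
    show False
    proof (cases rule: c1)
      case 1
      then show ?thesis
      proof (cases rule: c2)
        case 1 with \<open>(x,y) = (a,b)\<close> uv show ?thesis by simp
      next
        case 2 with \<open>(x,y) = (a,b)\<close> show ?thesis using u v P1 gfacts(5)[OF h] by (cases "b = d") auto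
      qed
    next
      case A: 2
      then show ?thesis
      proof (cases rule: c2)
        case 1 with A show ?thesis using u v P1 gfacts(5)[OF h] gfacts(4)[OF h] by (cases "b = d") auto
      next
        case 2 with A show ?thesis using u v uv OP P2 by (cases "a = c") auto
      qed
    qed
  qed
  thus ?thesis by auto
qed

lemma nz2:
  assumes g: "graph G" and h: "graph H"
  and OP: "\<And>u v x. u\<in>Q \<Longrightarrow> v\<in>Q \<Longrightarrow> u\<noteq>v \<Longrightarrow> adj H u x \<Longrightarrow> adj H v x \<Longrightarrow> False"
  and P2: "\<And>u v x. u\<in>P \<Longrightarrow> v\<in>P \<Longrightarrow> u\<noteq>v \<Longrightarrow> adj G u x \<Longrightarrow> adj G v x \<Longrightarrow> False"
  and P1: "\<And>u v. u\<in>P \<Longrightarrow> v\<in>P \<Longrightarrow> u\<noteq>v \<Longrightarrow> adj G u v \<Longrightarrow> False"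
  and u: "(a,b) \<in> P \<times> Q" and v: "(c,d) \<in> P \<times> Q" and uv: "(a,b) \<noteq> (c,d)"
  shows "closed_nbhd (direct_prod G H) (a,b) \<inter> closed_nbhd (direct_prod G H) (c,d) = {}"
proof -
  have "False" if w1: "(x,y) \<in> closed_nbhd (direct_prod G H) (a,b)"
     and w2: "(x,y) \<in> closed_nbhd (direct_prod G H) (c,d)" for x y
  proof -
    consider "(x,y) = (a,b)" | "adj G a x \<and> adj H b y" using w1 unfolding cn_prod by auto
    note c1 = this
    consider "(x,y) = (c,d)" | "adj G c x \<and> adj H d y" using w2 unfolding cn_prod by auto
    note c2 = this
    show False
    proof (cases rule: c1)
      case 1
      then show ?thesis
      proof (cases rule: c2)
        case 1 with \<open>(x,y) = (a,b)\<close> uv show ?thesis by simp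
      next
        case 2 with \<open>(x,y) = (a,b)\<close> show ?thesis using u v P1 gfacts(5)[OF g] by (cases "a = c") auto
      qed
    next
      case A: 2
      then show ?thesis
      proof (cases rule: c2)
        case 1 with A show ?thesis using u v P1 gfacts(5)[OF g] gfacts(4)[OF g] by (cases "a = c") auto
      next
        case 2 with A show ?thesis using u v uv OP P2 by (cases "b = d") auto
      qed
    qed
  qed
  thus ?thesis by auto
qed


lemma card_Iso:
  assumes g: "graph G" and h: "graph H"
  shows "int (card (Iso G H)) = int (card (isolated_vertices G)) * int (card (verts H))
    + int (card (isolated_vertices H)) * int (card (verts G))
    - int (card (isolated_vertices G)) * int (card (isolated_vertices H))"
proof -
  have sG: "isolated_vertices G \<subseteq> verts G" and sH: "isolated_vertices H \<subseteq> verts H"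
    unfolding isolated_vertices_def by auto
  have fG: "finite (verts G)" and fH: "finite (verts H)" using gfacts g h by auto
  have fi: "finite (isolated_vertices G)" "finite (isolated_vertices H)" using sG sH fG fH finite_subset by auto
  have e: "Iso G H = isolated_vertices G \<times> verts H \<union> verts G \<times> isolated_vertices H"
    using sG sH unfolding Iso_def by auto
  have e2: "(isolated_vertices G \<times> verts H) \<inter> (verts G \<times> isolated_vertices H) = isolated_vertices G \<times> isolated_vertices H"
    using sG sH by auto
  have "card (isolated_vertices G \<times> verts H) + card (verts G \<times> isolated_vertices H)
     = card (Iso G H) + card (isolated_vertices G \<times> isolated_vertices H)"
    unfolding e e2[symmetric] using fG fH fi by (intro card_Un_Int) auto
  hence "card (isolated_vertices G) * card (verts H) + card (isolated_vertices H) * card (verts G)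
     = card (Iso G H) + card (isolated_vertices G) * card (isolated_vertices H)"
    by (simp add: card_cartesian_product mult.commute)
  hence "int (card (isolated_vertices G) * card (verts H) + card (isolated_vertices H) * card (verts G))
     = int (card (Iso G H) + card (isolated_vertices G) * card (isolated_vertices H))" by simp
  thus ?thesis by simp
qed

lemma big1:
  assumes g: "graph G" and h: "graph H"
  shows "int (packing_number (direct_prod G H)) \<ge>
     int (open_packing_number (del_isolated G) * packing_number (del_isolated H)) + int (card (Iso G H))"
proof -
  have fG: "finite (verts G)" and fH: "finite (verts H)" using gfacts g h by auto
  obtain Q where Q: "open_packing (del_isolated G) Q" "card Q = open_packing_number (del_isolated G)"
    using opn_ex[OF del_fin[OF fG]] by blast
  obtain P where P: "packing (del_isolated H) P" "card P = packing_number (del_isolated H)"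
    using pn_ex[OF del_fin[OF fH]] by blast
  note qf = op_facts[OF g Q(1)] and pf = p_facts[OF h P(1)]
  have pk: "packing (direct_prod G H) (Q \<times> P \<union> Iso G H)"
  proof (rule pack_gen[OF g h])
    show "Q \<times> P \<subseteq> verts G \<times> verts H" using qf(1) pf(1) by auto
    fix u v assume "u \<in> Q \<times> P" "v \<in> Q \<times> P" "u \<noteq> v"
    thus "closed_nbhd (direct_prod G H) u \<inter> closed_nbhd (direct_prod G H) v = {}"
      apply (cases u; cases v; simp only:)
      apply (rule nz1[of G H Q P, OF g h])
      apply (erule (4) qf(2))
      apply (erule (4) pf(2))
      apply (erule (3) pf(3))
      apply assumption+
      done
  qed
  have fdp: "finite (verts (direct_prod G H))" using fG fH unfolding direct_prod_def by auto
  have fQ: "finite Q" using qf(1) fG finite_subset by blast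
  have fP: "finite P" using pf(1) fH finite_subset by blast
  have fI: "finite (Iso G H)" using fG fH unfolding Iso_def
    by (rule finite_subset[rotated, OF finite_cartesian_product]) auto
  have dj: "Q \<times> P \<inter> Iso G H = {}" using qf(1) pf(1) unfolding Iso_def by auto
  have "card (Q \<times> P \<union> Iso G H) = card Q * card P + card (Iso G H)"
    using card_Un_disjoint[OF finite_cartesian_product[OF fQ fP] fI dj] by (simp add: card_cartesian_product)
  moreover have "card (Q \<times> P \<union> Iso G H) \<le> packing_number (direct_prod G H)" using pn_ge[OF fdp pk] .
  ultimately show ?thesis using Q(2) P(2) by (metis of_nat_add of_nat_le_iff)
qed

lemma big2:
  assumes g: "graph G" and h: "graph H"
  shows "int (packing_number (direct_prod G H)) \<ge>
     int (open_packing_number (del_isolated H) * packing_number (del_isolated G)) + int (card (Iso G H))"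
proof -
  have fG: "finite (verts G)" and fH: "finite (verts H)" using gfacts g h by auto
  obtain Q where Q: "open_packing (del_isolated H) Q" "card Q = open_packing_number (del_isolated H)"
    using opn_ex[OF del_fin[OF fH]] by blast
  obtain P where P: "packing (del_isolated G) P" "card P = packing_number (del_isolated G)"
    using pn_ex[OF del_fin[OF fG]] by blast
  note qf = op_facts[OF h Q(1)] and pf = p_facts[OF g P(1)]
  have pk: "packing (direct_prod G H) (P \<times> Q \<union> Iso G H)"
  proof (rule pack_gen[OF g h])
    show "P \<times> Q \<subseteq> verts G \<times> verts H" using qf(1) pf(1) by auto
    fix u v assume "u \<in> P \<times> Q" "v \<in> P \<times> Q" "u \<noteq> v"
    thus "closed_nbhd (direct_prod G H) u \<inter> closed_nbhd (direct_prod G H) v = {}"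
      apply (cases u; cases v; simp only:)
      apply (rule nz2[of G H Q P, OF g h])
      apply (erule (4) qf(2))
      apply (erule (4) pf(2))
      apply (erule (3) pf(3))
      apply assumption+
      done
  qed
  have fdp: "finite (verts (direct_prod G H))" using fG fH unfolding direct_prod_def by auto
  have fQ: "finite Q" using qf(1) fH finite_subset by blast
  have fP: "finite P" using pf(1) fG finite_subset by blast
  have fI: "finite (Iso G H)" using fG fH unfolding Iso_def
    by (rule finite_subset[rotated, OF finite_cartesian_product]) auto
  have dj: "P \<times> Q \<inter> Iso G H = {}" using qf(1) pf(1) unfolding Iso_def by auto
  have "card (P \<times> Q \<union> Iso G H) = card P * card Q + card (Iso G H)"
    using card_Un_disjoint[OF finite_cartesian_product[OF fP fQ] fI dj] by (simp add: card_cartesian_product)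
  moreover have "card (P \<times> Q \<union> Iso G H) \<le> packing_number (direct_prod G H)" using pn_ge[OF fdp pk] .
  ultimately show ?thesis using Q(2) P(2) by (metis of_nat_add of_nat_le_iff mult.commute)
qed

theorem mainTheorem12:
  fixes G :: "'a sgraph" and H :: "'b sgraph"
  assumes "graph G" and "graph H"
  shows "int (packing_number (direct_prod G H)) \<ge>
    int (max (open_packing_number (del_isolated G) * packing_number (del_isolated H))
             (open_packing_number (del_isolated H) * packing_number (del_isolated G)))
    + int (card (isolated_vertices G)) * int (card (verts H))
    + int (card (isolated_vertices H)) * int (card (verts G))
    - int (card (isolated_vertices G)) * int (card (isolated_vertices H))"
  using big1[OF assms] big2[OF assms] card_Iso[OF assms] by (simp add: max_def)

end
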